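(* Let $r\in\mathbb{N}$. Every bounded Borel measurable sigmoidal function $\sigma:\mathbb{R}\to\mathbb{R}$ is discriminatory (for $r$). In particular, every continuous sigmoidal function is discriminatory.
   Context: A function $\sigma:\mathbb{R}\to\mathbb{R}$ is sigmoidal if $\sigma(t)\to1$ as $t\to+\infty$ and $\sigma(t)\to0$ as $t\to-\infty$. For a nonempty compact $X\subset\mathbb{R}^r$, $M(X)$ is the set of regular signed Borel measures on $X$ (finite signed measures whose positive and negative variations are regular Borel measures). $\sigma$ is discriminatory (for $r$) if for every nonempty compact $X\subset\mathbb{R}^r$ and every $\mu\in M(X)$: if $\int_X\sigma(m^{\mathrm T}x+k)\,d\mu(x)=0$ for all $m\in\mathbb{Z}^r$, $k\in\mathbb{Z}$, then $\mu=0$. *)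

theory Defs
  imports "HOL-Analysis.Analysis"
begin

definition sigmoidal :: "(real \<Rightarrow> real) \<Rightarrow> bool" where
  "sigmoidal \<sigma> \<longleftrightarrow> (\<sigma> \<longlongrightarrow> 1) at_top \<and> (\<sigma> \<longlongrightarrow> 0) at_bot"

definition regular_borel_measure_on :: "'a::topological_space set \<Rightarrow> 'a measure \<Rightarrow> bool" where
  "regular_borel_measure_on X N \<longleftrightarrow>
     sets N = sets (restrict_space borel X) \<and> finite_measure N \<and>
     (\<forall>A\<in>sets N.
        emeasure N A = (SUP K\<in>{K. compact K \<and> K \<subseteq> A}. emeasure N K) \<and>
        emeasure N A = (INF U\<in>{U. open U \<and> A \<subseteq> U}. emeasure N (U \<inter> X)))"

text \<open>A regular signed Borel measure mu on X is represented by its Jordan decomposition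
  mu = mu_pos - mu_neg with mu_pos, mu_neg finite regular Borel measures on X.
  Then the integral against mu is the difference of the integrals, and mu = 0 means that
  mu_pos and mu_neg agree on all Borel sets of X.\<close>
definition discriminatory :: "'n::finite itself \<Rightarrow> (real \<Rightarrow> real) \<Rightarrow> bool" where
  "discriminatory _ \<sigma> \<longleftrightarrow>
     (\<forall>(X :: (real^'n) set) (\<mu>p :: (real^'n) measure) (\<mu>n :: (real^'n) measure).
        compact X \<and> X \<noteq> {} \<and> regular_borel_measure_on X \<mu>p \<and> regular_borel_measure_on X \<mu>n \<and>
        (\<forall>(m :: real^'n) (k :: int). (\<forall>i. m $ i \<in> \<int>) \<longrightarrow>
           (\<integral>x. \<sigma> (m \<bullet> x + of_int k) \<partial>\<mu>p) - (\<integral>x. \<sigma> (m \<bullet> x + of_int k) \<partial>\<mu>n) = 0)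
        \<longrightarrow> (\<forall>A\<in>sets \<mu>p. measure \<mu>p A - measure \<mu>n A = 0))"

end

theory Submission
  imports Defs
begin

definition ratv :: "real^'n::finite \<Rightarrow> bool" where
  "ratv a \<longleftrightarrow> (\<forall>i. a $ i \<in> \<rat>)"

lemma ratv_add: "ratv a \<Longrightarrow> ratv b \<Longrightarrow> ratv (a + b)"
  and ratv_diff: "ratv a \<Longrightarrow> ratv b \<Longrightarrow> ratv (a - b)"
  and ratv_0: "ratv 0"
  by (auto simp: ratv_def)

inductive_set trig :: "(real^'n::finite \<Rightarrow> real) set" where
  tc: "ratv a \<Longrightarrow> (\<lambda>x. cos (a \<bullet> x)) \<in> trig"
| ts: "ratv a \<Longrightarrow> (\<lambda>x. sin (a \<bullet> x)) \<in> trig"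
| tadd: "f \<in> trig \<Longrightarrow> g \<in> trig \<Longrightarrow> (\<lambda>x. f x + g x) \<in> trig"
| tscale: "f \<in> trig \<Longrightarrow> (\<lambda>x. c * f x) \<in> trig"

lemma trig_const: "(\<lambda>x. c) \<in> trig"
proof -
  have "(\<lambda>x. c * cos ((0::real^'n) \<bullet> x)) \<in> trig" by (intro tscale tc ratv_0)
  then show ?thesis by simp
qed

lemma trig_comb: "ratv a \<Longrightarrow> ratv b \<Longrightarrow> (\<lambda>x. c1 * cos (a \<bullet> x) + c2 * cos (b \<bullet> x)) \<in> trig"
  "ratv a \<Longrightarrow> ratv b \<Longrightarrow> (\<lambda>x. c1 * sin (a \<bullet> x) + c2 * sin (b \<bullet> x)) \<in> trig"
  by (intro tadd tscale tc ts; assumption)+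

lemma trig_mult_gen:
  assumes "f \<in> trig" "ratv b"
  shows "(\<lambda>x. f x * cos (b \<bullet> x)) \<in> trig \<and> (\<lambda>x. f x * sin (b \<bullet> x)) \<in> trig"
  using assms(1)
proof induction
  case (tc a)
  have e1: "(\<lambda>x. cos (a \<bullet> x) * cos (b \<bullet> x)) = (\<lambda>x. (1/2) * cos ((a - b) \<bullet> x) + (1/2) * cos ((a + b) \<bullet> x))"
    by (auto simp: inner_diff_left inner_add_left cos_add cos_diff algebra_simps)
  have e2: "(\<lambda>x. cos (a \<bullet> x) * sin (b \<bullet> x)) = (\<lambda>x. (1/2) * sin ((a + b) \<bullet> x) + (-1/2) * sin ((a - b) \<bullet> x))"
    by (auto simp: inner_diff_left inner_add_left sin_add sin_diff algebra_simps)
  have r: "ratv (a - b)" "ratv (a + b)" using tc assms(2) by (auto intro: ratv_add ratv_diff)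
  show ?case unfolding e1 e2 by (intro conjI trig_comb r)
next
  case (ts a)
  have e1: "(\<lambda>x. sin (a \<bullet> x) * cos (b \<bullet> x)) = (\<lambda>x. (1/2) * sin ((a + b) \<bullet> x) + (1/2) * sin ((a - b) \<bullet> x))"
    by (auto simp: inner_diff_left inner_add_left sin_add sin_diff algebra_simps)
  have e2: "(\<lambda>x. sin (a \<bullet> x) * sin (b \<bullet> x)) = (\<lambda>x. (1/2) * cos ((a - b) \<bullet> x) + (-1/2) * cos ((a + b) \<bullet> x))"
    by (auto simp: inner_diff_left inner_add_left cos_add cos_diff algebra_simps)
  have r: "ratv (a - b)" "ratv (a + b)" using ts assms(2) by (auto intro: ratv_add ratv_diff)
  show ?case unfolding e1 e2 by (intro conjI trig_comb r)
next
  case (tadd f g)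
  then show ?case using trig.tadd[of "\<lambda>x. f x * cos (b \<bullet> x)" "\<lambda>x. g x * cos (b \<bullet> x)"]
      trig.tadd[of "\<lambda>x. f x * sin (b \<bullet> x)" "\<lambda>x. g x * sin (b \<bullet> x)"]
    by (simp add: distrib_right)
next
  case (tscale f c)
  then show ?case using trig.tscale[of "\<lambda>x. f x * cos (b \<bullet> x)" c]
      trig.tscale[of "\<lambda>x. f x * sin (b \<bullet> x)" c]
    by (simp add: mult.assoc)
qed

lemma trig_mult:
  assumes "g \<in> trig" "f \<in> trig"
  shows "(\<lambda>x. f x * g x) \<in> trig"
  using assms(1)
proof induction
  case (tc a) then show ?case using trig_mult_gen[OF assms(2)] by blast
next
  case (ts a) then show ?case using trig_mult_gen[OF assms(2)] by blast
next
  case (tadd g h)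
  then show ?case using trig.tadd[of "\<lambda>x. f x * g x" "\<lambda>x. f x * h x"] by (simp add: distrib_left)
next
  case (tscale g c)
  then show ?case using trig.tscale[of "\<lambda>x. f x * g x" c] by (simp add: algebra_simps)
qed

lemma trig_cont: "f \<in> trig \<Longrightarrow> continuous_on UNIV f"
  by (induction rule: trig.induct) (auto intro!: continuous_intros)

lemma trig_sep:
  fixes x y :: "real^'n::finite"
  assumes "x \<noteq> y"
  shows "\<exists>f\<in>trig. f x \<noteq> f y"
proof -
  obtain i where i: "x $ i \<noteq> y $ i" using assms by (auto simp: vec_eq_iff)
  define d where "d = x $ i - y $ i"
  have d0: "\<bar>d\<bar> > 0" using i by (simp add: d_def)
  obtain q where q: "q \<in> \<rat>" "0 < q" "q < pi / \<bar>d\<bar>"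
    using Rats_dense_in_real[of 0 "pi / \<bar>d\<bar>"] d0 by auto
  define a :: "real^'n" where "a = (\<chi> j. if j = i then q else 0)"
  have ra: "ratv a" using q by (auto simp: ratv_def a_def)
  have ax: "a \<bullet> z = q * z $ i" for z :: "real^'n"
    proof -
    have "a \<bullet> z = (\<Sum>j\<in>UNIV. if j = i then q * z$j else 0)"
      unfolding a_def inner_vec_def by (intro sum.cong) auto
    then show ?thesis by simp
  qed
  have qd: "0 < \<bar>q * d\<bar>" "\<bar>q * d\<bar> < pi"
    using q d0 by (auto simp: abs_mult field_simps)
  have "cos (q * d) < 1"
  proof -
    have "cos \<bar>q * d\<bar> < cos 0" using qd by (intro cos_monotone_0_pi) auto
    then show ?thesis by simp
  qed
  show ?thesis
  proof (rule ccontr)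
    assume "\<not> ?thesis"
    then have e: "cos (a \<bullet> x) = cos (a \<bullet> y)" "sin (a \<bullet> x) = sin (a \<bullet> y)"
      using tc[OF ra] ts[OF ra] by fastforce+
    have "cos (a \<bullet> x - a \<bullet> y) = cos (a \<bullet> y) * cos (a \<bullet> y) + sin (a \<bullet> y) * sin (a \<bullet> y)"
      unfolding cos_diff e ..
    then have "cos (a \<bullet> x - a \<bullet> y) = 1"
      using sin_cos_squared_add3[of "a \<bullet> y"] by linarith
    moreover have "a \<bullet> x - a \<bullet> y = q * d" by (simp add: ax d_def algebra_simps)
    ultimately show False using \<open>cos (q * d) < 1\<close> by simp
  qed
qed

locale mpair =
  fixes X :: "(real^'n::finite) set" and P N :: "(real^'n) measure"
  assumes cX: "compact X"
    and sP: "sets P = sets (restrict_space borel X)"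
    and sN: "sets N = sets (restrict_space borel X)"
    and fP: "finite_measure P" and fN: "finite_measure N"
begin

definition Z :: "(real^'n \<Rightarrow> real) \<Rightarrow> bool" where
  "Z f \<longleftrightarrow> integrable P f \<and> integrable N f \<and> integral\<^sup>L P f = integral\<^sup>L N f"

lemma spP: "space P = X" and spN: "space N = X"
  using sets_eq_imp_space_eq[OF sP] sets_eq_imp_space_eq[OF sN] by (auto simp: space_restrict_space)

lemma meas_gen:
  assumes "sets M = sets (restrict_space borel X)" "f \<in> borel_measurable borel"
  shows "f \<in> borel_measurable M"
  using measurable_restrict_space1[OF assms(2), of X] measurable_cong_sets[OF assms(1) refl] by blast

lemma measP: "f \<in> borel_measurable borel \<Longrightarrow> f \<in> borel_measurable P"
  and measN: "f \<in> borel_measurable borel \<Longrightarrow> f \<in> borel_measurable N"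
  using meas_gen sP sN by auto

lemma lim_gen:
  fixes s :: "nat \<Rightarrow> real^'n \<Rightarrow> real"
  assumes "finite_measure M" "space M = X" "\<And>i. integrable M (s i)"
    "\<And>x. x \<in> X \<Longrightarrow> (\<lambda>i. s i x) \<longlonglongrightarrow> f x" "\<And>i x. x \<in> X \<Longrightarrow> \<bar>s i x\<bar> \<le> C"
  shows "integrable M f \<and> (\<lambda>i. integral\<^sup>L M (s i)) \<longlonglongrightarrow> integral\<^sup>L M f"
proof -
  interpret finite_measure M by fact
  have fm: "f \<in> borel_measurable M"
    by (rule borel_measurable_LIMSEQ_real[of M s]) (use assms in auto)
  have w: "integrable M (\<lambda>_. C)" by simp
  have l: "AE x in M. (\<lambda>i. s i x) \<longlonglongrightarrow> f x" using assms by auto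
  have b: "AE x in M. norm (s i x) \<le> C" for i using assms by auto
  show ?thesis
    using integrable_dominated_convergence[OF fm _ w l b] integral_dominated_convergence[OF fm _ w l b] assms(3)
    by auto
qed

lemma Z_lim:
  assumes "\<And>i. Z (s i)" "\<And>x. x \<in> X \<Longrightarrow> (\<lambda>i. s i x) \<longlonglongrightarrow> f x" "\<And>i x. x \<in> X \<Longrightarrow> \<bar>s i x\<bar> \<le> C"
  shows "Z f"
proof -
  have 1: "integrable P f \<and> (\<lambda>i. integral\<^sup>L P (s i)) \<longlonglongrightarrow> integral\<^sup>L P f"
    by (rule lim_gen[OF fP spP]) (use assms in \<open>auto simp: Z_def\<close>)
  have 2: "integrable N f \<and> (\<lambda>i. integral\<^sup>L N (s i)) \<longlonglongrightarrow> integral\<^sup>L N f"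
    by (rule lim_gen[OF fN spN]) (use assms in \<open>auto simp: Z_def\<close>)
  have "(\<lambda>i. integral\<^sup>L P (s i)) = (\<lambda>i. integral\<^sup>L N (s i))" using assms(1) by (auto simp: Z_def)
  then have "integral\<^sup>L P f = integral\<^sup>L N f" using 1 2 LIMSEQ_unique by metis
  then show ?thesis using 1 2 by (simp add: Z_def)
qed

lemma Z_add: "Z f \<Longrightarrow> Z g \<Longrightarrow> Z (\<lambda>x. f x + g x)"
  and Z_diff: "Z f \<Longrightarrow> Z g \<Longrightarrow> Z (\<lambda>x. f x - g x)"
  and Z_scale: "Z f \<Longrightarrow> Z (\<lambda>x. c * f x)"
  by (auto simp: Z_def)

lemma Z_sum: "finite A \<Longrightarrow> (\<And>j. j \<in> A \<Longrightarrow> Z (g j)) \<Longrightarrow> Z (\<lambda>x. \<Sum>j\<in>A. g j x)"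
proof (induction A rule: finite_induct)
  case empty then show ?case by (simp add: Z_def)
next
  case (insert a A)
  then show ?case using Z_add[of "g a" "\<lambda>x. \<Sum>j\<in>A. g j x"] by simp
qed

lemma Z_cong: "Z f \<Longrightarrow> (\<And>x. x \<in> X \<Longrightarrow> f x = g x) \<Longrightarrow> Z g"
proof -
  assume "Z f" and e: "\<And>x. x \<in> X \<Longrightarrow> f x = g x"
  have "integrable P f = integrable P g" using Bochner_Integration.integrable_cong[of P P f g] spP e by auto
  moreover have "integral\<^sup>L P f = integral\<^sup>L P g" using Bochner_Integration.integral_cong[of P P f g] spP e by auto
  moreover have "integrable N f = integrable N g" using Bochner_Integration.integrable_cong[of N N f g] spN e by auto
  moreover have "integral\<^sup>L N f = integral\<^sup>L N g" using Bochner_Integration.integral_cong[of N N f g] spN e by auto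
  ultimately show "Z g" using \<open>Z f\<close> by (simp add: Z_def)
qed

lemma integrable_bdd:
  fixes f :: "real^'n \<Rightarrow> real"
  assumes "f \<in> borel_measurable borel" "\<And>x. x \<in> X \<Longrightarrow> \<bar>f x\<bar> \<le> B"
  shows "integrable P f" "integrable N f"
proof -
  show "integrable P f"
    using finite_measure.integrable_const_bound[OF fP, of f B] measP[OF assms(1)] assms(2) spP by auto
  show "integrable N f"
    using finite_measure.integrable_const_bound[OF fN, of f B] measN[OF assms(1)] assms(2) spN by auto
qed

lemma cont_bdd:
  fixes f :: "real^'n \<Rightarrow> real"
  assumes "continuous_on UNIV f"
  shows "\<exists>B. \<forall>x\<in>X. \<bar>f x\<bar> \<le> B"
proof -
  have "bounded (f ` X)"
    by (intro compact_imp_bounded compact_continuous_image continuous_on_subset[OF assms] cX) auto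
  then show ?thesis by (auto simp: bounded_iff)
qed

lemma integrable_cont:
  fixes f :: "real^'n \<Rightarrow> real"
  assumes "continuous_on UNIV f"
  shows "integrable P f" "integrable N f"
  using cont_bdd[OF assms] integrable_bdd[OF borel_measurable_continuous_onI[OF assms]] by blast+

end

lemma mult_comm_add: "(c::real) + t * r = r * t + c" by (simp add: algebra_simps)

lemma lin_top: "(t::real) > 0 \<Longrightarrow> filterlim (\<lambda>n::nat. real n * t + c) at_top sequentially"
proof -
  assume t: "t > 0"
  have "filterlim (\<lambda>n. t * real n) at_top sequentially"
    by (rule filterlim_tendsto_pos_mult_at_top[OF tendsto_const t filterlim_real_sequentially])
  then have "filterlim (\<lambda>n. c + t * real n) at_top sequentially"
    by (rule filterlim_tendsto_add_at_top[OF tendsto_const])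
  moreover have "(\<lambda>n. c + t * real n) = (\<lambda>n::nat. real n * t + c)" by (rule ext) (rule mult_comm_add)
  ultimately show ?thesis by simp
qed
lemma lin_bot: "(t::real) < 0 \<Longrightarrow> filterlim (\<lambda>n::nat. real n * t + c) at_bot sequentially"
proof -
  assume t: "t < 0"
  have "filterlim (\<lambda>n. t * real n) at_bot sequentially"
    by (rule filterlim_tendsto_neg_mult_at_bot[OF tendsto_const t filterlim_real_sequentially])
  then have "filterlim (\<lambda>n. c + t * real n) at_bot sequentially"
    by (rule filterlim_tendsto_add_at_bot_iff[OF tendsto_const, THEN iffD2])
  moreover have "(\<lambda>n. c + t * real n) = (\<lambda>n::nat. real n * t + c)" by (rule ext) (rule mult_comm_add)
  ultimately show ?thesis by simp
qed

lemma sig_bounded: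
  assumes "bounded (range (\<sigma>::real\<Rightarrow>real))"
  shows "\<exists>B\<ge>0. \<forall>t. \<bar>\<sigma> t\<bar> \<le> B"
proof -
  obtain B where "\<forall>y\<in>range \<sigma>. norm y \<le> B" using assms by (auto simp: bounded_iff)
  then show ?thesis by (metis abs_ge_zero order_trans rangeI real_norm_def)
qed

lemma sig_lim:
  assumes sg: "sigmoidal \<sigma>"
  shows "(\<lambda>n. \<sigma> (real n * t + c)) \<longlonglongrightarrow> (if t > 0 then 1 else if t = 0 then \<sigma> c else 0)"
proof -
  have s1: "(\<sigma> \<longlongrightarrow> 1) at_top" and s0: "(\<sigma> \<longlongrightarrow> 0) at_bot" using sg by (auto simp: sigmoidal_def)
  show ?thesis
  proof (cases "t > 0")
    case True
    then show ?thesis using filterlim_compose[OF s1 lin_top[OF True]] by simp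
  next
    case False
    show ?thesis
    proof (cases "t = 0")
      case True then show ?thesis by simp
    next
      case False
      then have "t < 0" using \<open>\<not> t > 0\<close> by simp
      then show ?thesis using filterlim_compose[OF s0 lin_bot[OF \<open>t < 0\<close>]] by simp
    qed
  qed
qed

lemma abs_if3: "\<bar>s\<bar> \<le> B \<Longrightarrow> 0 \<le> B \<Longrightarrow> \<bar>(if P then 1 else if Q then s else 0)\<bar> \<le> 1 + (B::real)"
  by auto

locale sig = mpair X P N for X :: "(real^'n::finite) set" and P N +
  fixes \<sigma> :: "real \<Rightarrow> real"
  assumes bd: "bounded (range \<sigma>)" and sm: "\<sigma> \<in> borel_measurable borel" and sg: "sigmoidal \<sigma>"
    and H: "\<forall>(m :: real^'n) (k :: int). (\<forall>i. m $ i \<in> \<int>) \<longrightarrow>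
           (\<integral>x. \<sigma> (m \<bullet> x + of_int k) \<partial>P) - (\<integral>x. \<sigma> (m \<bullet> x + of_int k) \<partial>N) = 0"
begin

definition "B = (SOME B. B \<ge> 0 \<and> (\<forall>t. \<bar>\<sigma> t\<bar> \<le> B))"
lemma B: "B \<ge> 0" "\<bar>\<sigma> t\<bar> \<le> B"
proof -
  obtain B' where b1: "B' \<ge> 0" and b2: "\<And>t. \<bar>\<sigma> t\<bar> \<le> B'" using sig_bounded[OF bd] by blast
  have "B' \<ge> 0 \<and> (\<forall>t. \<bar>\<sigma> t\<bar> \<le> B')" using b1 b2 by simp
  then have "B \<ge> 0 \<and> (\<forall>t. \<bar>\<sigma> t\<bar> \<le> B)" unfolding B_def by (rule someI)
  then show "B \<ge> 0" "\<bar>\<sigma> t\<bar> \<le> B" by auto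
qed

lemma Zsig:
  assumes "\<forall>i. m $ i \<in> \<int>"
  shows "Z (\<lambda>x. \<sigma> (m \<bullet> x + of_int k))"
proof -
  have me: "(\<lambda>x. \<sigma> (m \<bullet> x + of_int k)) \<in> borel_measurable borel"
    by (rule measurable_compose[OF _ sm]) (intro borel_measurable_continuous_onI continuous_intros)
  show ?thesis using integrable_bdd[OF me B(2)] H assms by (auto simp: Z_def)
qed

lemma Zstep1:
  assumes m: "\<forall>i. m $ i \<in> \<int>"
  shows "Z (\<lambda>x. if m \<bullet> x + of_int k > 0 then 1 else if m \<bullet> x + of_int k = 0 then \<sigma> (of_int \<phi>) else 0)"
proof (rule Z_lim)
  let ?s = "\<lambda>n::nat. \<lambda>x. \<sigma> ((real n *\<^sub>R m) \<bullet> x + of_int (int n * k + \<phi>))"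
  show "Z (?s n)" for n
    by (rule Zsig) (use m in \<open>auto intro: Ints_mult\<close>)
  show "\<bar>?s n x\<bar> \<le> B" for n x by (rule B)
  fix x
  have e: "(\<lambda>n. ?s n x) = (\<lambda>n. \<sigma> (real n * (m \<bullet> x + of_int k) + of_int \<phi>))"
    by (simp add: inner_scaleR_left distrib_left add.assoc)
  show "(\<lambda>n. ?s n x) \<longlonglongrightarrow> (if m \<bullet> x + of_int k > 0 then 1 else if m \<bullet> x + of_int k = 0 then \<sigma> (of_int \<phi>) else 0)"
    unfolding e by (rule sig_lim[OF sg])
qed

lemma Zhalf:
  assumes m: "\<forall>i. m $ i \<in> \<int>"
  shows "Z (\<lambda>x. if 0 \<le> m \<bullet> x + of_int k then 1 else 0)"
proof (rule Z_lim)
  let ?s = "\<lambda>n::nat. \<lambda>x. if m \<bullet> x + of_int k > 0 then 1 else if m \<bullet> x + of_int k = 0 then \<sigma> (of_int (int n)) else 0"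
  show "Z (?s n)" for n by (rule Zstep1[OF m])
  show "\<bar>?s n x\<bar> \<le> 1 + B" for n x by (rule abs_if3[OF B(2) B(1)])
  fix x
  have s1: "(\<sigma> \<longlongrightarrow> 1) at_top" using sg by (auto simp: sigmoidal_def)
  have "(\<lambda>n. \<sigma> (real n)) \<longlonglongrightarrow> 1" using filterlim_compose[OF s1 filterlim_real_sequentially] .
  then show "(\<lambda>n. ?s n x) \<longlonglongrightarrow> (if 0 \<le> m \<bullet> x + of_int k then 1 else 0)"
  proof (cases "m \<bullet> x + of_int k = 0")
    case True
    then have e1: "(\<lambda>n. ?s n x) = (\<lambda>n. \<sigma> (real n))" by simp
    have e2: "(if 0 \<le> m \<bullet> x + of_int k then 1 else 0) = (1::real)" using True by simp
    show ?thesis unfolding e1 e2 by fact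
  next
    case False
    then have "(\<lambda>n. ?s n x) = (\<lambda>n. if 0 \<le> m \<bullet> x + of_int k then 1 else 0)" by auto
    note e3 = this
    show ?thesis unfolding e3 by (rule tendsto_const)
  qed
qed

end

lemma ind_floor: "(0 \<le> (y::real) + of_int (- j)) = (j \<le> \<lfloor>y\<rfloor>)"
  by (simp add: le_floor_iff)
lemma hJ1: "\<bar>y\<bar> \<le> (M::real) \<Longrightarrow> \<lfloor>y\<rfloor> \<le> \<lceil>M\<rceil> \<and> - \<lceil>M\<rceil> - 1 \<le> \<lfloor>y\<rfloor>"
proof -
  assume a: "\<bar>y\<bar> \<le> M"
  have "of_int \<lfloor>y\<rfloor> \<le> y" "y < of_int \<lfloor>y\<rfloor> + 1" "M \<le> of_int \<lceil>M\<rceil>" by linarith+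
  then have "of_int \<lfloor>y\<rfloor> \<le> (of_int \<lceil>M\<rceil> :: real)" "(of_int (- \<lceil>M\<rceil>) :: real) < of_int (\<lfloor>y\<rfloor> + 1)" using a by linarith+
  then show ?thesis by linarith
qed

lemma fl1: "(c::real) > 0 \<Longrightarrow> t - inverse c \<le> of_int \<lfloor>c * t\<rfloor> / c"
proof -
  assume c: "c > 0"
  have "c * t - 1 \<le> of_int \<lfloor>c * t\<rfloor>" by linarith
  then have "(c * t - 1) / c \<le> of_int \<lfloor>c * t\<rfloor> / c" using c by (intro divide_right_mono) auto
  moreover have "(c * t - 1) / c = t - inverse c" using c by (simp add: field_simps)
  ultimately show ?thesis by simp
qed

lemma fl2: "(c::real) > 0 \<Longrightarrow> of_int \<lfloor>c * t\<rfloor> / c \<le> t"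
proof -
  assume c: "c > 0"
  have "of_int \<lfloor>c * t\<rfloor> \<le> c * t" by linarith
  then have "of_int \<lfloor>c * t\<rfloor> / c \<le> (c * t) / c" using c by (intro divide_right_mono) auto
  then show ?thesis using c by simp
qed

lemma floor_lim: "(\<lambda>K. of_int \<lfloor>real (Suc K) * t\<rfloor> / real (Suc K)) \<longlonglongrightarrow> (t::real)"
proof (rule tendsto_sandwich[of "\<lambda>K. t - inverse (real (Suc K))" _ _ "\<lambda>K. t"])
  show "\<forall>\<^sub>F K in sequentially. t - inverse (real (Suc K)) \<le> of_int \<lfloor>real (Suc K) * t\<rfloor> / real (Suc K)"
    by (intro always_eventually allI fl1) simp
  show "\<forall>\<^sub>F K in sequentially. of_int \<lfloor>real (Suc K) * t\<rfloor> / real (Suc K) \<le> t"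
    by (intro always_eventually allI fl2) simp
  show "(\<lambda>K. t - inverse (real (Suc K))) \<longlonglongrightarrow> t"
    using tendsto_diff[OF tendsto_const[of t] LIMSEQ_inverse_real_of_nat] by simp
qed simp

lemma floor_bound: "\<bar>of_int \<lfloor>real (Suc K) * t\<rfloor> / real (Suc K)\<bar> \<le> \<bar>t\<bar> + 1"
proof -
  have c: "real (Suc K) \<ge> 1" by simp
  have "inverse (real (Suc K)) \<le> 1" using c by (simp add: inverse_le_1_iff)
  moreover have "t - inverse (real (Suc K)) \<le> of_int \<lfloor>real (Suc K) * t\<rfloor> / real (Suc K)"
    by (rule fl1) simp
  moreover have "of_int \<lfloor>real (Suc K) * t\<rfloor> / real (Suc K) \<le> t" by (rule fl2) simp
  ultimately show ?thesis by linarith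
qed

lemma ratv_denom:
  assumes "ratv (a::real^'n::finite)"
  shows "\<exists>D::nat. D > 0 \<and> (\<forall>i. real D * a $ i \<in> \<int>)"
proof -
  have "\<exists>q::nat. q > 0 \<and> real q * a $ i \<in> \<int>" for i
  proof -
    have "a $ i \<in> \<rat>" using assms by (simp add: ratv_def)
    then obtain p b where pb: "b > 0" "a $ i = of_int p / of_int b" by (rule Rats_cases')
    then have "real (nat b) * a $ i = of_int p" by simp
    then show ?thesis using pb by (intro exI[of _ "nat b"]) simp
  qed
  then obtain q where q: "\<And>i. q i > 0 \<and> real (q i) * a $ i \<in> \<int>" by metis
  define D where "D = (\<Prod>i\<in>UNIV. q i)"
  have "D > 0" using q by (simp add: D_def)
  moreover have "real D * a $ i \<in> \<int>" for i
  proof -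
    define Q where "Q = (\<Prod>j\<in>UNIV - {i}. q j)"
    have "D = q i * Q" unfolding D_def Q_def by (simp add: prod.remove)
    then have "real D = real (q i) * real Q" by simp
    then have "real D * a $ i = real Q * (real (q i) * a $ i)" by (simp add: algebra_simps)
    moreover have "real Q \<in> \<int>" by simp
    ultimately show ?thesis using q[of i] by (metis Ints_mult)
  qed
  ultimately show ?thesis by blast
qed

context sig
begin

lemma Zphi:
  assumes m: "\<forall>i. m $ i \<in> \<int>" and ph: "continuous_on UNIV \<phi>"
  shows "Z (\<lambda>x. \<phi> (m \<bullet> x))"
proof -
  have "continuous_on UNIV (\<lambda>x. m \<bullet> x)" by (intro continuous_intros)
  then obtain L where L: "\<forall>x\<in>X. \<bar>m \<bullet> x\<bar> \<le> L"
    using cont_bdd by blast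
  have "bounded (\<phi> ` {-(L+1)..L+1})"
    by (intro compact_imp_bounded compact_continuous_image continuous_on_subset[OF ph]) auto
  then obtain Bp where "\<forall>y\<in>\<phi> ` {-(L+1)..L+1}. norm y \<le> Bp"
    unfolding bounded_iff by blast
  then have Bp: "\<And>t. t \<in> {-(L+1)..L+1} \<Longrightarrow> \<bar>\<phi> t\<bar> \<le> Bp" by auto
  show ?thesis
  proof (rule Z_lim)
    let ?s = "\<lambda>K x. \<phi> (of_int \<lfloor>real (Suc K) * (m \<bullet> x)\<rfloor> / real (Suc K))"
    show "(\<lambda>K. ?s K x) \<longlonglongrightarrow> \<phi> (m \<bullet> x)" if "x \<in> X" for x
    proof -
      have "isCont \<phi> (m \<bullet> x)" using ph by (simp add: continuous_on_eq_continuous_at)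
      then show ?thesis by (rule isCont_tendsto_compose[OF _ floor_lim])
    qed
    show "\<bar>?s K x\<bar> \<le> Bp" if "x \<in> X" for K x
    proof -
      have "\<bar>of_int \<lfloor>real (Suc K) * (m \<bullet> x)\<rfloor> / real (Suc K)\<bar> \<le> \<bar>m \<bullet> x\<bar> + 1" by (rule floor_bound)
      moreover have "\<bar>m \<bullet> x\<bar> \<le> L" using L that by auto
      ultimately have "of_int \<lfloor>real (Suc K) * (m \<bullet> x)\<rfloor> / real (Suc K) \<in> {-(L+1)..L+1}"
        by (simp only: atLeastAtMost_iff) linarith
      then show ?thesis by (rule Bp)
    qed
    fix K
    define c where "c = real (Suc K)"
    have c0: "c \<ge> 1" by (simp add: c_def)
    define J where "J = {-(\<lceil>c * L\<rceil> + 1) .. \<lceil>c * L\<rceil> + 1}"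
    let ?ind = "\<lambda>j x. if 0 \<le> (c *\<^sub>R m) \<bullet> x + of_int (- j) then 1 else (0::real)"
    have cm: "\<forall>i. (c *\<^sub>R m) $ i \<in> \<int>" using m by (auto simp: c_def intro: Ints_mult)
    have Zs: "Z (\<lambda>x. \<Sum>j\<in>J. \<phi> (of_int j / c) * (?ind j x - ?ind (j + 1) x))"
      by (intro Z_sum Z_scale Z_diff Zhalf[OF cm]) (simp add: J_def)
    show "Z (?s K)"
    proof (rule Z_cong[OF Zs])
      fix x assume x: "x \<in> X"
      define h where "h = \<lfloor>c * (m \<bullet> x)\<rfloor>"
      have i1: "?ind j x = (if j \<le> h then 1 else 0)" for j
        by (simp only: inner_scaleR_left ind_floor h_def)
      have hJ: "h \<in> J"
      proof -
        have "\<bar>c * (m \<bullet> x)\<bar> \<le> c * L" using L x c0 by (simp add: abs_mult mult_left_mono)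
        from hJ1[OF this] show ?thesis unfolding J_def h_def by simp
      qed
      have "(\<Sum>j\<in>J. \<phi> (of_int j / c) * (?ind j x - ?ind (j + 1) x)) = (\<Sum>j\<in>J. if j = h then \<phi> (of_int j / c) else 0)"
      proof (intro sum.cong refl)
        fix j
        have "?ind j x - ?ind (j + 1) x = (if j = h then 1 else 0)"
          unfolding i1[of j] i1[of "j + 1"] by auto
        then show "\<phi> (of_int j / c) * (?ind j x - ?ind (j + 1) x) = (if j = h then \<phi> (of_int j / c) else 0)"
          by simp
      qed
      also have "\<dots> = \<phi> (of_int h / c)" using hJ by (simp add: J_def)
      finally show "(\<Sum>j\<in>J. \<phi> (of_int j / c) * (?ind j x - ?ind (j + 1) x)) = ?s K x"
        by (simp add: h_def c_def)
    qed
  qed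
qed

lemma Zcos: "ratv a \<Longrightarrow> Z (\<lambda>x. cos (a \<bullet> x))"
  and Zsin: "ratv a \<Longrightarrow> Z (\<lambda>x. sin (a \<bullet> x))"
proof -
  assume "ratv a"
  then obtain D :: nat where D: "D > 0" "\<forall>i. real D * a $ i \<in> \<int>" using ratv_denom by blast
  have m: "\<forall>i. (real D *\<^sub>R a) $ i \<in> \<int>" using D by simp
  have D0: "real D \<noteq> 0" using D(1) by simp
  have e1: "(\<lambda>x. (\<lambda>t. cos (t / real D)) ((real D *\<^sub>R a) \<bullet> x)) = (\<lambda>x. cos (a \<bullet> x))"
    by (rule ext) (simp only: inner_scaleR_left, use D(1) in simp)
  have e2: "(\<lambda>x. (\<lambda>t. sin (t / real D)) ((real D *\<^sub>R a) \<bullet> x)) = (\<lambda>x. sin (a \<bullet> x))"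
    by (rule ext) (simp only: inner_scaleR_left, use D(1) in simp)
  have "Z (\<lambda>x. (\<lambda>t. cos (t / real D)) ((real D *\<^sub>R a) \<bullet> x))"
    by (rule Zphi[OF m]) (intro continuous_intros, use D0 in simp)
  then show "Z (\<lambda>x. cos (a \<bullet> x))" by (simp only: e1)
  have "Z (\<lambda>x. (\<lambda>t. sin (t / real D)) ((real D *\<^sub>R a) \<bullet> x))"
    by (rule Zphi[OF m]) (intro continuous_intros, use D0 in simp)
  then show "Z (\<lambda>x. sin (a \<bullet> x))" by (simp only: e2)
qed

lemma Ztrig: "f \<in> trig \<Longrightarrow> Z f"
  by (induction rule: trig.induct) (auto intro: Zcos Zsin Z_add Z_scale)

end

context sig
begin

lemma Zcont:
  assumes f: "continuous_on UNIV f"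
  shows "Z f"
proof -
  interpret function_ring_on trig X
  proof
    show "compact X" by (rule cX)
    show "continuous_on X f" if "f \<in> trig" for f
      using trig_cont[OF that] by (rule continuous_on_subset) simp
    show "(\<lambda>x. f x + g x) \<in> trig" if "f \<in> trig" "g \<in> trig" for f g using that by (rule tadd)
    show "(\<lambda>x. f x * g x) \<in> trig" if "f \<in> trig" "g \<in> trig" for f g using trig_mult[OF that(2) that(1)] .
    show "(\<lambda>_. c) \<in> trig" for c by (rule trig_const)
    show "\<exists>f\<in>trig. f x \<noteq> f y" if "x \<in> X" "y \<in> X" "x \<noteq> y" for x y using trig_sep[OF that(3)] .
  qed
  obtain F where F: "F \<in> UNIV \<rightarrow> trig" and u: "uniform_limit X F f sequentially"
    using Stone_Weierstrass[OF continuous_on_subset[OF f]] by blast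
  obtain N0 where N0: "\<And>n x. n \<ge> N0 \<Longrightarrow> x \<in> X \<Longrightarrow> dist (F n x) (f x) < 1"
    using uniform_limitD[OF u, of 1] by (auto simp: eventually_sequentially)
  obtain Bf where Bf: "\<forall>x\<in>X. \<bar>f x\<bar> \<le> Bf" using cont_bdd[OF f] by blast
  show ?thesis
  proof (rule Z_lim)
    show "Z (F (i + N0))" for i using F by (auto intro: Ztrig)
    show "(\<lambda>i. F (i + N0) x) \<longlonglongrightarrow> f x" if "x \<in> X" for x
      by (rule LIMSEQ_ignore_initial_segment[OF tendsto_uniform_limitI[OF u that]])
    show "\<bar>F (i + N0) x\<bar> \<le> Bf + 1" if "x \<in> X" for i x
      using N0[of "i + N0" x] Bf that by (auto simp: dist_real_def)
  qed
qed

lemma Zclosed: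
  assumes C: "closed C"
  shows "Z (indicator C)"
proof (cases "C = {}")
  case True
  have e: "(indicator {} :: real^'n \<Rightarrow> real) = (\<lambda>_. 0)" by (rule ext) simp
  show ?thesis unfolding True e by (rule Zcont[OF continuous_on_const])
next
  case ne: False
  show ?thesis
  proof (rule Z_lim)
    let ?s = "\<lambda>k x. max 0 (1 - real k * infdist x C)"
    show "Z (?s k)" for k by (rule Zcont) (intro continuous_intros)
    show "\<bar>?s k x\<bar> \<le> 1" for k x using infdist_nonneg[of x C] by auto
    fix x
    show "(\<lambda>k. ?s k x) \<longlonglongrightarrow> indicator C x"
    proof (cases "x \<in> C")
      case True
      then have "infdist x C = 0" by simp
      then show ?thesis using True by simp
    next
      case False
      then have d: "infdist x C > 0" using in_closed_iff_infdist_zero[OF C ne, of x] infdist_nonneg[of x C] by auto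
      have "eventually (\<lambda>k. ?s k x = 0) sequentially"
      proof (rule eventually_sequentiallyI[of "nat \<lceil>1 / infdist x C\<rceil>"])
        fix k assume k: "nat \<lceil>1 / infdist x C\<rceil> \<le> k"
        then have "1 / infdist x C \<le> real k" by linarith
        then have "1 \<le> real k * infdist x C" using d by (simp add: field_simps)
        then show "?s k x = 0" by simp
      qed
      then have "(\<lambda>k. ?s k x) \<longlonglongrightarrow> 0" by (rule tendsto_eventually)
      then show ?thesis using False by simp
    qed
  qed
qed

lemma setsP: "sets P = sigma_sets X ((\<inter>) X ` Collect closed)"
  and setsN: "sets N = sigma_sets X ((\<inter>) X ` Collect closed)"
proof -
  have sb: "sets borel = sigma_sets UNIV (Collect closed)"
    by (subst borel_eq_closed) (rule sets_measure_of, simp)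
  have X: "X \<in> sigma_sets UNIV (Collect closed)"
    using compact_imp_closed[OF cX] by (auto intro: sigma_sets.Basic)
  have "sets (restrict_space borel X) = sigma_sets X ((\<inter>) X ` Collect closed)"
    unfolding sets_restrict_space sb by (rule sigma_sets_Int[OF X]) simp
  then show "sets P = sigma_sets X ((\<inter>) X ` Collect closed)"
    "sets N = sigma_sets X ((\<inter>) X ` Collect closed)" using sP sN by auto
qed

lemma P_eq_N: "P = N"
proof (rule measure_eqI_generator_eq[OF _ _ _ setsP setsN, of "\<lambda>_. X"])
  show "Int_stable ((\<inter>) X ` Collect closed)"
    unfolding Int_stable_def
  proof (intro ballI)
    fix a b assume "a \<in> (\<inter>) X ` Collect closed" "b \<in> (\<inter>) X ` Collect closed"
    then obtain C1 C2 where "closed C1" "closed C2" "a = X \<inter> C1" "b = X \<inter> C2" by auto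
    then show "a \<inter> b \<in> (\<inter>) X ` Collect closed"
      by (intro image_eqI[of _ _ "C1 \<inter> C2"]) auto
  qed
  show "(\<inter>) X ` Collect closed \<subseteq> Pow X" by auto
  show "range (\<lambda>_. X) \<subseteq> (\<inter>) X ` Collect closed" by (auto intro!: image_eqI[of _ _ UNIV])
  show "(\<Union>i::nat. X) = X" by simp
  show "emeasure P X \<noteq> \<infinity>" for i :: nat
    using finite_measure.emeasure_finite[OF fP] by simp
  fix A assume "A \<in> (\<inter>) X ` Collect closed"
  then obtain C where C: "closed C" "A = X \<inter> C" by auto
  have AP: "A \<in> sets P" using setsP C by (auto intro: sigma_sets.Basic)
  have AN: "A \<in> sets N" using setsN C by (auto intro: sigma_sets.Basic)
  have ZC: "Z (indicator C)" by (rule Zclosed[OF C(1)])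
  have "integral\<^sup>L P (indicator C) = measure P A" using C by (simp add: spP Int_commute)
  moreover have "integral\<^sup>L N (indicator C) = measure N A" using C by (simp add: spN Int_commute)
  ultimately have "measure P A = measure N A" using ZC by (simp add: Z_def)
  then show "emeasure P A = emeasure N A"
    using finite_measure.emeasure_eq_measure[OF fP] finite_measure.emeasure_eq_measure[OF fN] by simp
qed

end

lemma disc_main:
  fixes \<sigma> :: "real \<Rightarrow> real"
  assumes "bounded (range \<sigma>)" "\<sigma> \<in> borel_measurable borel" "sigmoidal \<sigma>"
  shows "discriminatory TYPE('n::finite) \<sigma>"
  unfolding discriminatory_def
proof (intro allI impI ballI)
  fix X :: "(real^'n) set" and \<mu>p \<mu>n A
  assume h: "compact X \<and> X \<noteq> {} \<and> regular_borel_measure_on X \<mu>p \<and> regular_borel_measure_on X \<mu>n \<and>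
        (\<forall>(m :: real^'n) (k :: int). (\<forall>i. m $ i \<in> \<int>) \<longrightarrow>
           (\<integral>x. \<sigma> (m \<bullet> x + of_int k) \<partial>\<mu>p) - (\<integral>x. \<sigma> (m \<bullet> x + of_int k) \<partial>\<mu>n) = 0)"
  have r: "sets \<mu>p = sets (restrict_space borel X)" "finite_measure \<mu>p"
    "sets \<mu>n = sets (restrict_space borel X)" "finite_measure \<mu>n"
    using h unfolding regular_borel_measure_on_def by blast+
  interpret sig X \<mu>p \<mu>n \<sigma>
    by (rule sig.intro[OF mpair.intro sig_axioms.intro]) (use h assms r in blast)+
  show "measure \<mu>p A - measure \<mu>n A = 0" using P_eq_N by simp
qed

lemma cont_sig_bounded:
  fixes \<sigma> :: "real \<Rightarrow> real"
  assumes c: "continuous_on UNIV \<sigma>" and s: "sigmoidal \<sigma>"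
  shows "bounded (range \<sigma>)"
proof -
  have s1: "(\<sigma> \<longlongrightarrow> 1) at_top" and s0: "(\<sigma> \<longlongrightarrow> 0) at_bot" using s by (auto simp: sigmoidal_def)
  have "eventually (\<lambda>t. dist (\<sigma> t) 1 < 1) at_top" using s1 by (rule tendstoD) simp
  then obtain T1 where T1: "\<And>t. t \<ge> T1 \<Longrightarrow> dist (\<sigma> t) 1 < 1" by (auto simp: eventually_at_top_linorder)
  have "eventually (\<lambda>t. dist (\<sigma> t) 0 < 1) at_bot" using s0 by (rule tendstoD) simp
  then obtain T0 where T0: "\<And>t. t \<le> T0 \<Longrightarrow> dist (\<sigma> t) 0 < 1" by (auto simp: eventually_at_bot_linorder)
  have sub: "range \<sigma> \<subseteq> \<sigma> ` {T0..T1} \<union> cball 0 2"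
  proof
    fix y assume "y \<in> range \<sigma>"
    then obtain t where t: "y = \<sigma> t" by auto
    show "y \<in> \<sigma> ` {T0..T1} \<union> cball 0 2"
    proof (cases "t \<ge> T1")
      case True then show ?thesis using T1[OF True] t by (auto simp: dist_real_def)
    next
      case False
      show ?thesis
      proof (cases "t \<le> T0")
        case True then show ?thesis using T0[OF True] t by (auto simp: dist_real_def)
      next
        case False then show ?thesis using \<open>\<not> t \<ge> T1\<close> t by auto
      qed
    qed
  qed
  have "bounded (\<sigma> ` {T0..T1})"
    by (intro compact_imp_bounded compact_continuous_image continuous_on_subset[OF c]) auto
  then have "bounded (\<sigma> ` {T0..T1} \<union> cball 0 2)" by (simp add: bounded_Un)
  then show ?thesis using sub by (rule bounded_subset)
qed

theorem lemma4p2p4: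
  shows "(\<forall>\<sigma>. bounded (range \<sigma>) \<and> \<sigma> \<in> borel_measurable borel \<and> sigmoidal \<sigma>
            \<longrightarrow> discriminatory TYPE('n::finite) \<sigma>)
       \<and> (\<forall>\<sigma>. continuous_on UNIV \<sigma> \<and> sigmoidal \<sigma> \<longrightarrow> discriminatory TYPE('n::finite) \<sigma>)"
proof (intro conjI allI impI)
  fix \<sigma> :: "real \<Rightarrow> real"
  assume "bounded (range \<sigma>) \<and> \<sigma> \<in> borel_measurable borel \<and> sigmoidal \<sigma>"
  then show "discriminatory TYPE('n::finite) \<sigma>" using disc_main by blast
next
  fix \<sigma> :: "real \<Rightarrow> real"
  assume a: "continuous_on UNIV \<sigma> \<and> sigmoidal \<sigma>"
  then have "bounded (range \<sigma>)" using cont_sig_bounded by blast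
  moreover have "\<sigma> \<in> borel_measurable borel" using a by (intro borel_measurable_continuous_onI) auto
  ultimately show "discriminatory TYPE('n::finite) \<sigma>" using disc_main a by blast
qed

end
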